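(* Let $X\subset\mathbb{R}^d$ be compact and let $K\colon\mathbb{R}\times\mathbb{R}\to\mathbb{R}$ be a continuous positive definite kernel with $|K(s,t)|\le1$. Let $Z=\mathbb{R}^d\times\mathbb{R}\times\mathbb{R}$, for $z=(a,b,t)\in Z$ let $\psi_z(x)=K(\langle a,x\rangle+b,t)$ on $X$, and for a finite Borel measure $\rho$ on $Z$ let $K_\rho(x,x')=\int_Z\psi_z(x)\psi_z(x')\,d\rho(z)$ on $X\times X$. Let $\mathcal{F}$ be the closure of $\{\psi_z:z\in Z\}$ in $C(X)$ with respect to the sup norm, and let $$\mathrm{Cone}(\mathcal{F})=\Big\{(x,x')\mapsto\sum_{j=1}^m w_jf_j(x)f_j(x') : m\in\mathbb{N},\ w_j\ge0,\ f_j\in\mathcal{F}\Big\}.$$ Then the closure of $\{K_\rho:\rho \text{ a finite Borel measure on } Z\}$ in the sup norm on $X\times X$ equals the closure of $\mathrm{Cone}(\mathcal{F})$ in the sup norm on $X\times X$. *)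

theory Defs
  imports "HOL-Analysis.Analysis"
begin

definition pd_kernel :: "(real \<Rightarrow> real \<Rightarrow> real) \<Rightarrow> bool" where
  "pd_kernel K \<longleftrightarrow> (\<forall>s t. K s t = K t s) \<and>
     (\<forall>(n::nat) (c::nat \<Rightarrow> real) (x::nat \<Rightarrow> real).
        (\<Sum>i<n. \<Sum>j<n. c i * c j * K (x i) (x j)) \<ge> 0)"

definition psi :: "(real \<Rightarrow> real \<Rightarrow> real) \<Rightarrow> 'a::euclidean_space \<times> real \<times> real \<Rightarrow> 'a \<Rightarrow> real" where
  "psi K z x = (case z of (a, b, t) \<Rightarrow> K (inner a x + b) t)"

definition K_rho :: "(real \<Rightarrow> real \<Rightarrow> real) \<Rightarrow> ('a::euclidean_space \<times> real \<times> real) measure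
     \<Rightarrow> 'a \<Rightarrow> 'a \<Rightarrow> real" where
  "K_rho K \<rho> x x' = (\<integral>z. psi K z x * psi K z x' \<partial>\<rho>)"

text \<open>Closure in the sup norm over the domain A, of a set of functions considered
  as functions on A only (represented extensionally: value undefined outside A).\<close>
definition sup_closure :: "'b set \<Rightarrow> ('b \<Rightarrow> real) set \<Rightarrow> ('b \<Rightarrow> real) set" where
  "sup_closure A S = {g \<in> extensional A.
      \<forall>e>0. \<exists>f\<in>S. \<forall>p\<in>A. \<bar>f p - g p\<bar> < e}"

definition feature_cone :: "('a \<Rightarrow> real) set \<Rightarrow> ('a \<times> 'a \<Rightarrow> real) set" where
  "feature_cone F = {(\<lambda>(x, x'). \<Sum>j<m. w j * f j x * f j x') | (m::nat) (w::nat \<Rightarrow> real) f.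
      \<forall>j<m. w j \<ge> 0 \<and> f j \<in> F}"

end

theory Submission
  imports Defs
begin

lemma sup_closure_sub:
  assumes h: "\<And>f e. f \<in> S \<Longrightarrow> e > 0 \<Longrightarrow> \<exists>g\<in>T. \<forall>p\<in>A. \<bar>f p - g p\<bar> < e"
  shows "sup_closure A S \<subseteq> sup_closure A T"
proof
  fix g assume g: "g \<in> sup_closure A S"
  have gE: "g \<in> extensional A" and gA: "\<And>e. e > 0 \<Longrightarrow> \<exists>f\<in>S. \<forall>p\<in>A. \<bar>f p - g p\<bar> < e"
    using g unfolding sup_closure_def by auto
  have "\<exists>k\<in>T. \<forall>p\<in>A. \<bar>k p - g p\<bar> < e" if e: "e > 0" for e :: real
  proof -
    obtain f where f: "f \<in> S" "\<forall>p\<in>A. \<bar>f p - g p\<bar> < e/2"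
      using gA[of "e/2"] e by auto
    obtain k where k: "k \<in> T" "\<forall>p\<in>A. \<bar>f p - k p\<bar> < e/2"
      using h[OF f(1), of "e/2"] e by auto
    have "\<forall>p\<in>A. \<bar>k p - g p\<bar> < e"
    proof
      fix p assume "p \<in> A"
      then have "\<bar>f p - g p\<bar> < e/2" "\<bar>f p - k p\<bar> < e/2" using f k by auto
      then show "\<bar>k p - g p\<bar> < e" by linarith
    qed
    then show ?thesis using k(1) by blast
  qed
  then show "g \<in> sup_closure A T" using gE unfolding sup_closure_def by blast
qed

lemma sup_closure_eq:
  assumes "\<And>f e. f \<in> S \<Longrightarrow> e > 0 \<Longrightarrow> \<exists>g\<in>T. \<forall>p\<in>A. \<bar>f p - g p\<bar> < e"
      and "\<And>f e. f \<in> T \<Longrightarrow> e > 0 \<Longrightarrow> \<exists>g\<in>S. \<forall>p\<in>A. \<bar>f p - g p\<bar> < e"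
  shows "sup_closure A S = sup_closure A T"
  using sup_closure_sub[of S T A, OF assms(1)] sup_closure_sub[of T S A, OF assms(2)] by blast

lemma psi_cont:
  assumes "continuous_on UNIV (\<lambda>(s, t). K s t)"
  shows "continuous_on UNIV (\<lambda>w. psi K (fst w) (snd w))"
proof -
  have eq: "(\<lambda>w. psi K (fst w) (snd w)) = (\<lambda>(s, t). K s t) \<circ>
     (\<lambda>w::('a::euclidean_space \<times> real \<times> real) \<times> 'a. (inner (fst (fst w)) (snd w) + fst (snd (fst w)), snd (snd (fst w))))"
    by (auto simp: psi_def fun_eq_iff split: prod.splits)
  have "continuous_on UNIV ((\<lambda>(s, t). K s t) \<circ>
     (\<lambda>w::('a::euclidean_space \<times> real \<times> real) \<times> 'a. (inner (fst (fst w)) (snd w) + fst (snd (fst w)), snd (snd (fst w)))))"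
    by (rule continuous_on_compose[OF _ continuous_on_subset[OF assms]], intro continuous_intros; simp)
  then show ?thesis by (subst eq)
qed

lemma psi_z_cont:
  assumes "continuous_on UNIV (\<lambda>(s, t). K s t)"
  shows "continuous_on UNIV (\<lambda>z. psi K z x)"
proof -
  have "continuous_on UNIV (\<lambda>z. (\<lambda>w. psi K (fst w) (snd w)) (z, x))"
    by (rule continuous_on_compose2[OF psi_cont[OF assms], of UNIV "\<lambda>z. (z, x)"])
       (intro continuous_intros, simp)
  then show ?thesis by simp
qed

lemma psi_bound: assumes "\<And>s t. \<bar>K s t\<bar> \<le> 1" shows "\<bar>psi K z x\<bar> \<le> 1"
  using assms by (auto simp: psi_def split: prod.splits)

lemma psi2_meas:
  assumes "continuous_on UNIV (\<lambda>(s, t). K s t)"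
  shows "(\<lambda>z. psi K z x * psi K z x') \<in> borel_measurable borel"
  by (intro borel_measurable_continuous_onI continuous_on_mult psi_z_cont[OF assms])

lemma discrete_rho:
  fixes z :: "nat \<Rightarrow> 'a::euclidean_space \<times> real \<times> real"
  assumes w: "\<And>j. j < m \<Longrightarrow> w j \<ge> 0"
  defines "\<rho> \<equiv> distr (density (count_space {..<m}) (\<lambda>j. ennreal (w j))) borel z"
  shows "sets \<rho> = sets borel" "finite_measure \<rho>"
    "\<And>f. f \<in> borel_measurable borel \<Longrightarrow> (\<integral>y. f y \<partial>\<rho>) = (\<Sum>j<m. w j * f (z j))"
proof -
  show "sets \<rho> = sets borel" unfolding \<rho>_def by simp
  have "emeasure \<rho> (space \<rho>) = emeasure (point_measure {..<m} (\<lambda>j. ennreal (w j))) {..<m}"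
    unfolding \<rho>_def point_measure_def by (subst emeasure_distr) auto
  also have "\<dots> = (\<Sum>j<m. ennreal (w j))"
    by (subst emeasure_point_measure_finite) auto
  finally show "finite_measure \<rho>" by (intro finite_measureI) auto
  fix f :: "'a \<times> real \<times> real \<Rightarrow> real" assume f: "f \<in> borel_measurable borel"
  have "(\<integral>y. f y \<partial>\<rho>) = (\<integral>j. f (z j) \<partial>density (count_space {..<m}) (\<lambda>j. ennreal (w j)))"
    unfolding \<rho>_def by (rule integral_distr) (auto simp: f)
  also have "\<dots> = (\<integral>j. w j * f (z j) \<partial>count_space {..<m})"
    using w by (subst integral_density) (auto simp: f)
  also have "\<dots> = (\<Sum>j<m. w j * f (z j))"
    by (subst lebesgue_integral_count_space_finite) auto
  finally show "(\<integral>y. f y \<partial>\<rho>) = (\<Sum>j<m. w j * f (z j))" .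
qed

lemma prod_approx:
  fixes a b a0 b0 \<eta> :: real
  assumes "\<bar>a - a0\<bar> \<le> \<eta>" "\<bar>b - b0\<bar> \<le> \<eta>" "\<bar>a0\<bar> \<le> 1" "\<bar>b0\<bar> \<le> 1" "\<eta> \<le> 1"
  shows "\<bar>a * b - a0 * b0\<bar> \<le> 3 * \<eta>"
proof -
  have "a * b - a0 * b0 = (a - a0) * b + a0 * (b - b0)" by algebra
  moreover have "\<bar>(a - a0) * b\<bar> \<le> \<eta> * 2"
    unfolding abs_mult using assms by (intro mult_mono) auto
  moreover have "\<bar>a0 * (b - b0)\<bar> \<le> 1 * \<eta>"
    unfolding abs_mult using assms by (intro mult_mono) auto
  ultimately show ?thesis by linarith
qed

lemma approx_Krho:
  fixes X :: "'a::euclidean_space set" and \<rho> :: "('a \<times> real \<times> real) measure"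
  assumes X: "compact X" and cont: "continuous_on UNIV (\<lambda>(s, t). K s t)"
    and bnd: "\<And>s t. \<bar>K s t\<bar> \<le> 1"
    and sets_eq: "sets \<rho> = sets borel" and fin: "finite_measure \<rho>" and e: "e > 0"
  shows "\<exists>(m::nat) w c. (\<forall>j<m. w j \<ge> 0) \<and> (\<forall>x\<in>X. \<forall>x'\<in>X.
           \<bar>K_rho K \<rho> x x' - (\<Sum>j<m. w j * psi K (c j) x * psi K (c j) x')\<bar> < e)"
proof -
  interpret finite_measure \<rho> by (fact fin)
  have space_eq: "space \<rho> = UNIV" using sets_eq_imp_space_eq[OF sets_eq] by simp
  have meas_borel: "f \<in> borel_measurable \<rho>" if "f \<in> borel_measurable borel" for f :: "_ \<Rightarrow> real"
    using that measurable_cong_sets[OF sets_eq refl] by blast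
  have sets_b: "A \<in> sets \<rho>" if "A \<in> sets borel" for A using that sets_eq by simp
  define M where "M = measure \<rho> UNIV"
  have M0: "M \<ge> 0" unfolding M_def by simp
  have lim: "(\<lambda>n. measure \<rho> (- cball 0 (real n))) \<longlonglongrightarrow> measure \<rho> (\<Inter>n. - cball (0::'a \<times> real \<times> real) (real n))"
    by (rule finite_Lim_measure_decseq) (auto simp: decseq_def intro!: sets_b borel_open)
  have "(\<Inter>n. - cball (0::'a \<times> real \<times> real) (real n)) = {}"
  proof -
    have "\<exists>n. z \<in> cball 0 (real n)" for z :: "'a \<times> real \<times> real"
      using real_arch_simple[of "norm z"] by (auto simp: dist_norm)
    then show ?thesis by blast
  qed
  with lim have "(\<lambda>n. measure \<rho> (- cball 0 (real n))) \<longlonglongrightarrow> 0" by simp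
  then have "eventually (\<lambda>n. measure \<rho> (- cball 0 (real n)) < e/4) sequentially"
    using e by (intro order_tendstoD(2)) auto
  then obtain N where N: "measure \<rho> (- cball 0 (real N)) < e/4"
    by (auto simp: eventually_sequentially)
  define C where "C = cball (0::'a \<times> real \<times> real) (real N)"
  have C: "compact C" "C \<in> sets borel" unfolding C_def by (auto intro: borel_closed)
  have Ci: "integrable \<rho> (indicator (- C) :: _ \<Rightarrow> real)"
    by (intro integrable_real_indicator sets_b) (auto simp: C_def top.not_eq_extremum[symmetric] intro!: borel_open)
  define h where "h q = psi K (fst q) (fst (snd q)) * psi K (fst q) (snd (snd q))"
    for q :: "('a \<times> real \<times> real) \<times> 'a \<times> 'a"
  have h1: "continuous_on UNIV (\<lambda>q::('a \<times> real \<times> real) \<times> 'a \<times> 'a. (\<lambda>w. psi K (fst w) (snd w)) (fst q, fst (snd q)))"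
    by (rule continuous_on_compose2[OF psi_cont[OF cont]]) (intro continuous_intros, simp)
  have h2: "continuous_on UNIV (\<lambda>q::('a \<times> real \<times> real) \<times> 'a \<times> 'a. (\<lambda>w. psi K (fst w) (snd w)) (fst q, snd (snd q)))"
    by (rule continuous_on_compose2[OF psi_cont[OF cont]]) (intro continuous_intros, simp)
  have hc: "continuous_on UNIV h" unfolding h_def using continuous_on_mult[OF h1 h2] by simp
  define \<epsilon> where "\<epsilon> = e / (4 * (M + 1))"
  have \<epsilon>: "\<epsilon> > 0" using e M0 unfolding \<epsilon>_def by auto
  have "uniformly_continuous_on (C \<times> (X \<times> X)) h"
    by (rule compact_uniformly_continuous[OF continuous_on_subset[OF hc]]) (auto intro: compact_Times C X)
  then obtain \<delta> where \<delta>: "\<delta> > 0"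
    "\<And>q q'. q \<in> C \<times> (X \<times> X) \<Longrightarrow> q' \<in> C \<times> (X \<times> X) \<Longrightarrow> dist q' q < \<delta> \<Longrightarrow> dist (h q') (h q) < \<epsilon>"
    unfolding uniformly_continuous_on_def using \<epsilon> by metis
  have close: "\<bar>psi K z x * psi K z x' - psi K c x * psi K c x'\<bar> < \<epsilon>"
    if "z \<in> C" "c \<in> C" "dist c z < \<delta>" "x \<in> X" "x' \<in> X" for z c x x'
    using \<delta>(2)[of "(z, x, x')" "(c, x, x')"] that by (auto simp: h_def dist_Pair_Pair dist_real_def dist_commute)
  obtain D where D: "D \<subseteq> C" "finite D" "C \<subseteq> (\<Union>c\<in>D. ball c \<delta>)"
    using compactE_image[OF C(1), of C "\<lambda>c. ball c \<delta>"] \<delta>(1) by force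
  obtain c where c: "bij_betw c {0..<card D} D" using ex_bij_betw_nat_finite[OF D(2)] by blast
  define m where "m = card D"
  define B where "B j = ball (c j) \<delta> \<inter> C" for j
  define A where "A = disjointed B"
  have cD: "c j \<in> C" if "j < m" for j using c D(1) that unfolding m_def bij_betw_def by auto
  have AB: "A j \<subseteq> B j" for j unfolding A_def by (rule disjointed_subset)
  have Adisj: "disjoint_family A" unfolding A_def by (rule disjoint_family_disjointed)
  have UA: "(\<Union>j\<in>{0..<m}. A j) = C"
  proof -
    have "(\<Union>j\<in>{0..<m}. A j) = (\<Union>j\<in>{0..<m}. B j)" unfolding A_def by (rule finite_UN_disjointed_eq)
    also have "\<dots> = C"
    proof
      show "(\<Union>j\<in>{0..<m}. B j) \<subseteq> C" unfolding B_def by auto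
      show "C \<subseteq> (\<Union>j\<in>{0..<m}. B j)"
      proof
        fix z assume z: "z \<in> C"
        then obtain d where "d \<in> D" "z \<in> ball d \<delta>" using D(3) by auto
        then obtain j where "j < m" "c j = d" using c unfolding m_def bij_betw_def
          by (metis atLeastLessThan_iff imageE)
        then show "z \<in> (\<Union>j\<in>{0..<m}. B j)" using z \<open>z \<in> ball d \<delta>\<close> unfolding B_def by auto
      qed
    qed
    finally show ?thesis .
  qed
  have Ameas: "A j \<in> sets borel" for j
    unfolding A_def disjointed_def B_def
    using C(2) by (intro sets.Diff sets.finite_UN sets.Int) (auto intro: borel_open)
  define w where "w j = measure \<rho> (A j)" for j
  have "(\<forall>j<m. w j \<ge> 0) \<and> (\<forall>x\<in>X. \<forall>x'\<in>X.
           \<bar>K_rho K \<rho> x x' - (\<Sum>j<m. w j * psi K (c j) x * psi K (c j) x')\<bar> < e)"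
  proof (intro conjI allI impI ballI)
    fix j show "w j \<ge> 0" unfolding w_def by simp
  next
    fix x x' assume x: "x \<in> X" and x': "x' \<in> X"
    define g where "g z = psi K z x * psi K z x'" for z
    have gm: "g \<in> borel_measurable \<rho>" unfolding g_def by (intro meas_borel psi2_meas[OF cont])
    have gb: "\<bar>g z\<bar> \<le> 1" for z
      unfolding g_def abs_mult using psi_bound[of K z x, OF bnd] psi_bound[of K z x', OF bnd]
      by (simp add: mult_le_one)
    have gi: "integrable \<rho> g"
      by (rule integrable_const_bound[where B=1]) (auto simp: gb gm)
    have Aind: "integrable \<rho> (indicator (A j) :: _ \<Rightarrow> real)" for j
      by (intro integrable_real_indicator sets_b Ameas) (auto simp: top.not_eq_extremum[symmetric])
    have Ai: "integrable \<rho> (\<lambda>z. indicator (A j) z * g (c j))" for j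
      by (intro integrable_mult_left integrable_real_indicator sets_b Ameas) (auto simp: top.not_eq_extremum[symmetric])
    have si: "integrable \<rho> (\<lambda>z. \<Sum>j<m. indicator (A j) z * g (c j))"
      by (rule Bochner_Integration.integrable_sum[where f="\<lambda>j z. (indicator (A j) z :: real) * g (c j)"]) (rule Ai)
    have sint: "(\<integral>z. (\<Sum>j<m. indicator (A j) z * g (c j)) \<partial>\<rho>) = (\<Sum>j<m. w j * g (c j))"
      by (subst Bochner_Integration.integral_sum[where f="\<lambda>j z. (indicator (A j) z :: real) * g (c j)"]) (auto intro: Ai simp: w_def space_eq Aind)
    define F where "F z = g z - (\<Sum>j<m. indicator (A j) z * g (c j))" for z
    have Fi: "integrable \<rho> F" unfolding F_def by (rule Bochner_Integration.integrable_diff[OF gi si])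
    have Fint: "K_rho K \<rho> x x' - (\<Sum>j<m. w j * psi K (c j) x * psi K (c j) x') = (\<integral>z. F z \<partial>\<rho>)"
    proof -
      have "K_rho K \<rho> x x' = integral\<^sup>L \<rho> g" by (simp add: K_rho_def g_def[abs_def])
      moreover have "(\<integral>z. F z \<partial>\<rho>) = integral\<^sup>L \<rho> g - (\<Sum>j<m. w j * g (c j))"
        unfolding F_def Bochner_Integration.integral_diff[OF gi si] sint ..
      ultimately show ?thesis by (simp add: g_def mult.assoc)
    qed
    have Fb: "\<bar>F z\<bar> \<le> indicator (- C) z + \<epsilon>" for z
    proof (cases "z \<in> C")
      case False
      then have "indicator (A j) z = (0::real)" for j using AB[of j] unfolding B_def by (auto simp: indicator_def)
      then show ?thesis using False gb[of z] \<epsilon> by (simp add: F_def)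
    next
      case True
      then obtain j where j: "j < m" "z \<in> A j" using UA by auto
      have "(\<Sum>i<m. indicator (A i) z * g (c i)) = (\<Sum>i\<in>{j}. indicator (A i) z * g (c i))"
      proof (rule sum.mono_neutral_right)
        show "\<forall>i\<in>{..<m} - {j}. indicator (A i) z * g (c i) = 0"
          using Adisj j(2) by (auto simp: disjoint_family_on_def indicator_def)
      qed (use j in auto)
      also have "\<dots> = g (c j)" using j by simp
      finally have "F z = g z - g (c j)" unfolding F_def by simp
      moreover have "\<bar>g z - g (c j)\<bar> < \<epsilon>"
        unfolding g_def using close[OF True cD[OF j(1)] _ x x'] AB[of j] j(2) unfolding B_def
        by (auto simp: dist_commute)
      moreover have "indicator (- C) z = (0::real)" using True by simp
      ultimately show ?thesis by simp
    qed
    have "\<bar>\<integral>z. F z \<partial>\<rho>\<bar> \<le> (\<integral>z. indicator (- C) z + \<epsilon> \<partial>\<rho>)"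
      by (rule integral_abs_bound_integral[OF Fi]) (auto intro!: Bochner_Integration.integrable_add Ci Fb)
    also have "\<dots> = measure \<rho> (- C) + \<epsilon> * M"
      by (subst Bochner_Integration.integral_add) (auto intro!: Ci simp: space_eq M_def)
    also have "\<dots> < e/4 + e/4"
    proof -
      have "\<epsilon> * M = e/4 * (M / (M+1))" unfolding \<epsilon>_def using M0 by (simp add: field_simps)
      also have "\<dots> \<le> e/4 * 1" using M0 e by (intro mult_left_mono) auto
      finally show ?thesis using N unfolding C_def by simp
    qed
    finally show "\<bar>K_rho K \<rho> x x' - (\<Sum>j<m. w j * psi K (c j) x * psi K (c j) x')\<bar> < e"
      using Fint e by simp
  qed
  then show ?thesis by (intro exI[where x=m] exI[where x=w] exI[where x=c])
qed

theorem proposition3: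
  fixes X :: "'a::euclidean_space set"
    and K :: "real \<Rightarrow> real \<Rightarrow> real"
  assumes "compact X"
    and "continuous_on UNIV (\<lambda>(s, t). K s t)"
    and "pd_kernel K"
    and "\<And>s t. \<bar>K s t\<bar> \<le> 1"
  shows "sup_closure (X \<times> X)
           {(\<lambda>(x, x'). K_rho K \<rho> x x') | \<rho> :: ('a \<times> real \<times> real) measure.
              sets \<rho> = sets borel \<and> finite_measure \<rho>}
       = sup_closure (X \<times> X) (feature_cone (sup_closure X {psi K z | z. True}))"
proof (rule sup_closure_eq)
  let ?S1 = "{(\<lambda>(x, x'). K_rho K \<rho> x x') | \<rho> :: ('a \<times> real \<times> real) measure.
              sets \<rho> = sets borel \<and> finite_measure \<rho>}"
  let ?F = "sup_closure X {psi K z | z. True}"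
  fix f and e :: real assume f: "f \<in> ?S1" and e: "e > 0"
  then obtain \<rho> :: "('a \<times> real \<times> real) measure" where \<rho>: "f = (\<lambda>(x, x'). K_rho K \<rho> x x')"
    "sets \<rho> = sets borel" "finite_measure \<rho>" by blast
  obtain m :: nat and w c where wc: "\<forall>j<m. w j \<ge> 0"
    "\<forall>x\<in>X. \<forall>x'\<in>X. \<bar>K_rho K \<rho> x x' - (\<Sum>j<m. w j * psi K (c j) x * psi K (c j) x')\<bar> < e"
    using approx_Krho[OF assms(1,2,4) \<rho>(2,3) e] by blast
  define fj where "fj j = restrict (psi K (c j)) X" for j
  have fjF: "fj j \<in> ?F" for j
  proof -
    have "\<forall>e>0. \<exists>f\<in>{psi K z |z. True}. \<forall>p\<in>X. \<bar>f p - fj j p\<bar> < e"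
    proof (intro allI impI)
      fix e :: real assume "e > 0"
      then show "\<exists>f\<in>{psi K z |z. True}. \<forall>p\<in>X. \<bar>f p - fj j p\<bar> < e"
      proof (intro bexI[of _ "psi K (c j)"])
        show "psi K (c j) \<in> {psi K z |z. True}" by blast
      qed (use \<open>e > 0\<close> in \<open>auto simp: fj_def\<close>)
    qed
    then show ?thesis by (simp add: sup_closure_def fj_def)
  qed
  define g where "g = (\<lambda>(x::'a, x'::'a). \<Sum>j<m. w j * fj j x * fj j x')"
  have gF: "g \<in> feature_cone ?F"
    unfolding feature_cone_def g_def mem_Collect_eq
    by (rule exI[of _ m], rule exI[of _ w], rule exI[of _ fj]) (use wc(1) fjF in auto)
  show "\<exists>g\<in>feature_cone ?F. \<forall>p\<in>X \<times> X. \<bar>f p - g p\<bar> < e"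
  proof (rule bexI[OF _ gF], intro ballI)
    fix p assume "p \<in> X \<times> X"
    then obtain x x' where xx: "p = (x, x')" "x \<in> X" "x' \<in> X" by auto
    then show "\<bar>f p - g p\<bar> < e" using wc(2) by (simp add: \<rho>(1) g_def fj_def)
  qed
next
  let ?S1 = "{(\<lambda>(x, x'). K_rho K \<rho> x x') | \<rho> :: ('a \<times> real \<times> real) measure.
              sets \<rho> = sets borel \<and> finite_measure \<rho>}"
  let ?F = "sup_closure X {psi K z | z. True}"
  fix f and e :: real assume f: "f \<in> feature_cone ?F" and e: "e > 0"
  obtain m :: nat and w fs where f_eq: "f = (\<lambda>(x, x'). \<Sum>j<m. w j * fs j x * fs j x')"
    and wf: "\<forall>j<m. w j \<ge> 0 \<and> fs j \<in> ?F"
    using f unfolding feature_cone_def by blast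
  define W where "W = (\<Sum>j<m. w j)"
  have wpos: "\<And>j. j < m \<Longrightarrow> w j \<ge> 0" using wf by blast
  have W0: "W \<ge> 0" unfolding W_def using wpos by (intro sum_nonneg) auto
  define \<eta> where "\<eta> = min 1 (e / (4 * (W + 1)))"
  have \<eta>: "\<eta> > 0" "\<eta> \<le> 1" using e W0 by (auto simp: \<eta>_def)
  have \<eta>W: "3 * \<eta> * W < e"
  proof -
    have "\<eta> * W \<le> e / (4 * (W + 1)) * W" unfolding \<eta>_def using W0 by (intro mult_right_mono) auto
    also have "\<dots> = e / 4 * (W / (W + 1))" using W0 by (simp add: field_simps)
    also have "\<dots> \<le> e / 4 * 1" using W0 e by (intro mult_left_mono) auto
    finally show ?thesis using e by simp
  qed
  have "\<forall>j. \<exists>z. j < m \<longrightarrow> (\<forall>x\<in>X. \<bar>psi K z x - fs j x\<bar> < \<eta>)"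
  proof
    fix j show "\<exists>z. j < m \<longrightarrow> (\<forall>x\<in>X. \<bar>psi K z x - fs j x\<bar> < \<eta>)"
    proof (cases "j < m")
      case True
      then have "fs j \<in> ?F" using wf by blast
      then obtain f' where "f' \<in> {psi K z |z. True}" "\<forall>p\<in>X. \<bar>f' p - fs j p\<bar> < \<eta>"
        using \<eta>(1) unfolding sup_closure_def by blast
      then show ?thesis by blast
    qed auto
  qed
  then obtain z where z: "\<And>j x. j < m \<Longrightarrow> x \<in> X \<Longrightarrow> \<bar>psi K (z j) x - fs j x\<bar> < \<eta>" by metis
  define \<rho> where "\<rho> = distr (density (count_space {..<m}) (\<lambda>j. ennreal (w j))) borel z"
  have \<rho>1: "sets \<rho> = sets borel" "finite_measure \<rho>"
    unfolding \<rho>_def using discrete_rho(1,2)[where m=m and w=w and z=z, OF wpos] by auto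
  show "\<exists>g\<in>?S1. \<forall>p\<in>X \<times> X. \<bar>f p - g p\<bar> < e"
  proof (rule bexI[of _ "\<lambda>(x, x'). K_rho K \<rho> x x'"])
    show "(\<lambda>(x, x'). K_rho K \<rho> x x') \<in> ?S1" using \<rho>1 by blast
    show "\<forall>p\<in>X \<times> X. \<bar>f p - (\<lambda>(x, x'). K_rho K \<rho> x x') p\<bar> < e"
    proof
      fix p assume "p \<in> X \<times> X"
      then obtain x x' where xx: "p = (x, x')" "x \<in> X" "x' \<in> X" by auto
      have Kr: "K_rho K \<rho> x x' = (\<Sum>j<m. w j * (psi K (z j) x * psi K (z j) x'))"
        unfolding K_rho_def \<rho>_def
        by (rule discrete_rho(3)[where m=m and w=w and z=z, OF wpos psi2_meas[OF assms(2)]])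
      have each: "\<bar>fs j x * fs j x' - psi K (z j) x * psi K (z j) x'\<bar> \<le> 3 * \<eta>" if "j < m" for j
        using z[OF that xx(2)] z[OF that xx(3)] psi_bound[of K "z j" x, OF assms(4)]
          psi_bound[of K "z j" x', OF assms(4)] \<eta>(2)
        by (intro prod_approx) (auto simp: abs_minus_commute)
      have "f p - (\<lambda>(x, x'). K_rho K \<rho> x x') p
          = (\<Sum>j<m. w j * (fs j x * fs j x' - psi K (z j) x * psi K (z j) x'))"
        by (simp add: xx(1) f_eq Kr sum_subtractf[symmetric] algebra_simps)
      also have "\<bar>\<dots>\<bar> \<le> (\<Sum>j<m. \<bar>w j * (fs j x * fs j x' - psi K (z j) x * psi K (z j) x')\<bar>)"
        by (rule sum_abs)
      also have "\<dots> \<le> (\<Sum>j<m. w j * (3 * \<eta>))"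
      proof (rule sum_mono)
        fix j assume "j \<in> {..<m}"
        then show "\<bar>w j * (fs j x * fs j x' - psi K (z j) x * psi K (z j) x')\<bar> \<le> w j * (3 * \<eta>)"
          using each[of j] wpos[of j] by (simp add: abs_mult mult_left_mono)
      qed
      also have "\<dots> = 3 * \<eta> * W" by (simp add: W_def sum_distrib_right mult.commute)
      finally show "\<bar>f p - (\<lambda>(x, x'). K_rho K \<rho> x x') p\<bar> < e" using \<eta>W by linarith
    qed
  qed
qed

end
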